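(* Let $K$ be a number field and let $A=A_1\cdots A_n$ with $A_1,\ldots,A_n\in M_d(K)$. Suppose there exists $r\ge0$ such that $\operatorname{rank}(A)=\operatorname{rank}(A_iA_{i+1})=r$ for all $i\in[1,n-1]$. (1) There exists a subproduct $A'\coloneqq A_{i_1}\cdots A_{i_k}$ with $1=i_1<i_2<\cdots<i_{k-1}<i_k=n$ such that $A\parallel A'$ and $k\le\binom{d}{r}+3$. (2) If $n\ge 2\binom{d}{r}+4$, then there are $1\le k<l\le n$ such that $A_k\cdots A_l$ is completely pseudo-regular of rank $r$.
   Context: For $A,B\in M_d(K)$, write $A\parallel B$ if $\operatorname{im}(A)=\operatorname{im}(B)$ and $\ker(A)=\ker(B)$. A matrix is completely pseudo-regular if it is contained in a subgroup of the multiplicative semigroup $M_d(K)$; equivalently, $\operatorname{im}(C)\cap\ker(C)=0$. *)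

theory Defs
  imports "HOL-Analysis.Analysis"
begin

text \<open>A number field, realised (via a complex embedding) as a subfield K of the
complex numbers that is finite-dimensional as a vector space over the rationals.\<close>
definition number_field :: "complex set \<Rightarrow> bool" where
  "number_field K \<longleftrightarrow>
     0 \<in> K \<and> 1 \<in> K \<and>
     (\<forall>x\<in>K. \<forall>y\<in>K. x + y \<in> K \<and> x * y \<in> K \<and> - x \<in> K) \<and>
     (\<forall>x\<in>K. x \<noteq> 0 \<longrightarrow> inverse x \<in> K) \<and>
     (\<exists>B. finite B \<and> B \<subseteq> K \<and>
        (\<forall>x\<in>K. \<exists>c. (\<forall>b\<in>B. c b \<in> \<rat>) \<and> x = (\<Sum>b\<in>B. c b * b)))"

definition mat_over :: "complex set \<Rightarrow> complex^'d^'d \<Rightarrow> bool" where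
  "mat_over K M \<longleftrightarrow> (\<forall>i j. M $ i $ j \<in> K)"

definition mat_im :: "'a::field^'d^'d \<Rightarrow> ('a^'d) set" where
  "mat_im M = range (\<lambda>x. M *v x)"

definition mat_ker :: "'a::field^'d^'d \<Rightarrow> ('a^'d) set" where
  "mat_ker M = {x. M *v x = 0}"

definition par :: "'a::field^'d^'d \<Rightarrow> 'a^'d^'d \<Rightarrow> bool" (infix "\<parallel>" 50) where
  "A \<parallel> B \<longleftrightarrow> mat_im A = mat_im B \<and> mat_ker A = mat_ker B"

text \<open>C is contained in a subgroup of the multiplicative semigroup M_d(K):
a set G of matrices over K, closed under multiplication, with an identity
element e of G and inverses (w.r.t. e) inside G.\<close>
definition completely_pseudo_regular ::
  "complex set \<Rightarrow> complex^'d^'d \<Rightarrow> bool" where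
  "completely_pseudo_regular K C \<longleftrightarrow>
     (\<exists>G e. (\<forall>M\<in>G. mat_over K M) \<and> C \<in> G \<and> e \<in> G \<and>
        (\<forall>x\<in>G. \<forall>y\<in>G. x ** y \<in> G) \<and>
        (\<forall>x\<in>G. e ** x = x \<and> x ** e = x) \<and>
        (\<forall>x\<in>G. \<exists>y\<in>G. x ** y = e \<and> y ** x = e))"

definition list_prod :: "(nat \<Rightarrow> 'a::semiring_1^'d^'d) \<Rightarrow> nat list \<Rightarrow> 'a^'d^'d" where
  "list_prod A is = foldr (\<lambda>i M. A i ** M) is (mat 1)"

text \<open>Ordered product A_i A_{i+1} ... A_j (identity if j < i).\<close>
definition mprod :: "(nat \<Rightarrow> 'a::semiring_1^'d^'d) \<Rightarrow> nat \<Rightarrow> nat \<Rightarrow> 'a^'d^'d" where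
  "mprod A i j = list_prod A [i..<Suc j]"

end

theory Submission
  imports Defs
begin

lemma rank_nullity_sub:
  fixes X :: "'a::field^'n^'n"
  assumes S: "vec.subspace S"
  shows "vec.dim ((*v) X ` S) + vec.dim (S \<inter> {x. X *v x = 0}) = vec.dim S"
proof -
  let ?Z = "S \<inter> {x. X *v x = 0}"
  have Zs: "vec.subspace ?Z"
    using S by (intro vec.subspace_inter) (auto simp: vec.subspace_def matrix_vector_right_distrib vector_scalar_commute)
  obtain B0 where B0: "B0 \<subseteq> ?Z" "vec.independent B0" "?Z \<subseteq> vec.span B0" "card B0 = vec.dim ?Z"
    using vec.basis_exists by blast
  obtain B where B: "B0 \<subseteq> B" "B \<subseteq> S" "vec.independent B" "S \<subseteq> vec.span B"
    using vec.maximal_independent_subset_extend[of B0 S] B0 by blast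
  define C where "C = B - B0"
  have finB: "finite B" using B(3) vec.independent_bound_general by blast
  have indC: "vec.independent C" unfolding C_def using B(3) vec.independent_mono by blast
  have spanS: "vec.span B = S" using B S vec.span_minimal vec.span_superset by blast
  have cardB: "card B = vec.dim S" using B vec.basis_card_eq_dim by blast
  have cardC: "card C = card B - card B0" unfolding C_def using finB B(1) card_Diff_subset finite_subset by blast
  have spanZ: "vec.span B0 = ?Z" using B0 Zs vec.span_minimal vec.span_superset by blast
  have dimC: "vec.dim (vec.span C) = card C" using indC vec.dim_span_eq_card_independent by blast
  have sumeq: "{x + y |x y. x \<in> vec.span C \<and> y \<in> ?Z} = S"
  proof -
    have "B = C \<union> B0" unfolding C_def using B(1) by blast
    moreover have "vec.span (C \<union> B0) = {x + y |x y. x \<in> vec.span C \<and> y \<in> vec.span B0}" by (rule vec.span_Un)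
    ultimately show ?thesis using spanS spanZ by simp
  qed
  have "vec.dim {x + y |x y. x \<in> vec.span C \<and> y \<in> ?Z} + vec.dim (vec.span C \<inter> ?Z) = vec.dim (vec.span C) + vec.dim ?Z"
    using vec.dim_sums_Int[OF vec.subspace_span Zs] .
  then have e2: "vec.dim S + vec.dim (vec.span C \<inter> ?Z) = card C + vec.dim ?Z"
    by (simp only: sumeq dimC)
  have le: "card B0 \<le> card B" using finB B(1) card_mono by blast
  have "vec.dim (vec.span C \<inter> ?Z) = 0"
    using e2 cardC cardB B0(4) le by linarith
  then have int0: "vec.span C \<inter> ?Z \<subseteq> {0}"
    by (simp only: vec.dim_eq_0)
  have CS: "vec.span C \<subseteq> S"
    using spanS C_def vec.span_mono by (metis Diff_subset)
  have inj: "inj_on ((*v) X) (vec.span C)"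
    unfolding vec.inj_on_iff_eq_0[OF vec.subspace_span]
  proof (intro ballI impI)
    fix x assume "x \<in> vec.span C" "X *v x = 0"
    then have "x \<in> vec.span C \<inter> ?Z" using CS by blast
    then show "x = 0" using int0 by blast
  qed
  have "(*v) X ` S = (*v) X ` vec.span C"
  proof
    show "(*v) X ` vec.span C \<subseteq> (*v) X ` S"
      using CS by (rule image_mono)
    show "(*v) X ` S \<subseteq> (*v) X ` vec.span C"
    proof
      fix y assume "y \<in> (*v) X ` S"
      then obtain x where x: "x \<in> S" "y = X *v x" by blast
      then obtain a b where ab: "x = a + b" "a \<in> vec.span C" "b \<in> ?Z" using sumeq by blast
      then have "y = X *v a" using x by (simp add: matrix_vector_right_distrib)
      then show "y \<in> (*v) X ` vec.span C" using ab by blast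
    qed
  qed
  then have "vec.dim ((*v) X ` S) = card C"
    using vec.dim_image_eq[OF matrix_vector_mul_linear_gen, of X "vec.span C"] inj dimC
    by (simp only: vec.span_span)
  then show ?thesis using cardC cardB B0(4) le by linarith
qed
lemma dim_rows_le_columns_gen:
  fixes A :: "'a::field^'n^'m"
  shows "vec.dim (rows A) \<le> vec.dim (columns A)"
proof -
  obtain B where B: "B \<subseteq> columns A" "vec.independent B" "columns A \<subseteq> vec.span B" "card B = vec.dim (columns A)"
    using vec.basis_exists by blast
  have finB: "finite B" using B(2) vec.independent_bound_general by blast
  have "\<forall>j. \<exists>u. column j A = (\<Sum>v\<in>B. u v *s v)"
  proof
    fix j
    have "column j A \<in> vec.span B" using B(3) unfolding columns_def by blast
    then show "\<exists>u. column j A = (\<Sum>v\<in>B. u v *s v)" using vec.span_finite[OF finB] by blast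
  qed
  then obtain u where u: "\<And>j. column j A = (\<Sum>v\<in>B. u j v *s v)" by metis
  define \<rho> where "\<rho> v = (\<chi> j. u j v)" for v
  have rowi: "row i A = (\<Sum>v\<in>B. (v $ i) *s \<rho> v)" for i
  proof -
    have "row i A $ j = (\<Sum>v\<in>B. (v $ i) *s \<rho> v) $ j" for j
    proof -
      have "row i A $ j = column j A $ i" by (simp add: row_def column_def)
      also have "\<dots> = (\<Sum>v\<in>B. u j v * v $ i)" by (simp add: u sum_component)
      also have "\<dots> = (\<Sum>v\<in>B. (v $ i) *s \<rho> v) $ j" by (simp add: sum_component \<rho>_def mult.commute)
      finally show ?thesis .
    qed
    then show ?thesis by (simp add: vec_eq_iff)
  qed
  have "rows A \<subseteq> vec.span (\<rho> ` B)"
  proof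
    fix x assume "x \<in> rows A"
    then obtain i where "x = row i A" unfolding rows_def by blast
    have "row i A \<in> vec.span (\<rho> ` B)" unfolding rowi
      by (rule vec.span_sum, rule vec.span_scale, rule vec.span_base) auto
    then show "x \<in> vec.span (\<rho> ` B)" using \<open>x = row i A\<close> by simp
  qed
  then have "vec.dim (rows A) \<le> card (\<rho> ` B)" using vec.dim_le_card finB by blast
  also have "\<dots> \<le> card B" using finB card_image_le by blast
  finally show ?thesis using B(4) by simp
qed

lemma rank_columns_gen:
  fixes A :: "'a::field^'n^'m"
  shows "rank A = vec.dim (columns A)"
  using dim_rows_le_columns_gen[of A] dim_rows_le_columns_gen[of "transpose A"]
  by (simp add: row_rank_def_gen rows_transpose columns_transpose)

lemma mat_vec_axis: "(A::'a::field^'n^'m) *v axis j 1 = column j A"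
  by (simp add: vec_eq_iff matrix_vector_mult_def column_def axis_def if_distrib cong: if_cong)

lemma range_span_columns:
  fixes A :: "'a::field^'n^'m"
  shows "range ((*v) A) = vec.span (columns A)"
proof
  show "range ((*v) A) \<subseteq> vec.span (columns A)"
    using matrix_vector_mult_in_columnspace_gen by blast
  have "vec.subspace (range ((*v) A))"
    by (metis vec.subspace_UNIV vec.subspace_image)
  moreover have "columns A \<subseteq> range ((*v) A)"
  proof
    fix x assume "x \<in> columns A"
    then obtain j where "x = column j A" unfolding columns_def by blast
    then show "x \<in> range ((*v) A)" using mat_vec_axis[of A j] by (metis rangeI)
  qed
  ultimately show "vec.span (columns A) \<subseteq> range ((*v) A)"
    using vec.span_minimal by blast
qed

lemma rank_im:
  fixes A :: "'a::field^'n^'n"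
  shows "rank A = vec.dim (mat_im A)"
  unfolding mat_im_def range_span_columns vec.dim_span rank_columns_gen ..
lemma subspace_mat_im: "vec.subspace (mat_im (X::'a::field^'n^'n))"
  unfolding mat_im_def by (metis vec.subspace_UNIV vec.subspace_image)

lemma subspace_mat_ker: "vec.subspace (mat_ker (X::'a::field^'n^'n))"
  unfolding mat_ker_def vec.subspace_def
  by (simp add: matrix_vector_right_distrib vector_scalar_commute)

lemma mat_im_mult: "mat_im ((X::'a::field^'n^'n) ** (Y::'a^'n^'n)) = (*v) X ` mat_im Y"
  unfolding mat_im_def by (auto simp: matrix_vector_mul_assoc[symmetric] image_iff)

lemma mat_im_mult_sub: "mat_im ((X::'a::field^'n^'n) ** (Y::'a^'n^'n)) \<subseteq> mat_im X"
  unfolding mat_im_def by (auto simp: matrix_vector_mul_assoc[symmetric])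

lemma mat_ker_mult_sub: "mat_ker (Y::'a::field^'n^'n) \<subseteq> mat_ker (X ** (Y::'a^'n^'n))"
  unfolding mat_ker_def by (auto simp: matrix_vector_mul_assoc[symmetric])

lemma rank_mult_le_right: "rank ((X::'a::field^'n^'n) ** (Y::'a^'n^'n)) \<le> rank Y"
  using vec.dim_image_le[OF matrix_vector_mul_linear_gen, of X "mat_im Y"] rank_im[of "X ** Y"] rank_im[of Y]
  by (simp add: mat_im_mult)

lemma rank_mult_le_left: "rank ((X::'a::field^'n^'n) ** (Y::'a^'n^'n)) \<le> rank X"
  using vec.dim_subset[OF mat_im_mult_sub, of X Y] rank_im[of "X ** Y"] rank_im[of X] by simp

lemma rank_ker: "rank (X::'a::field^'n^'n) + vec.dim (mat_ker X) = CARD('n)"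
proof -
  have "vec.dim ((*v) X ` UNIV) + vec.dim (UNIV \<inter> {x. X *v x = 0}) = vec.dim (UNIV::('a^'n) set)"
    by (rule rank_nullity_sub[OF vec.subspace_UNIV])
  then show ?thesis by (simp add: rank_im mat_im_def mat_ker_def card_cart_basis)
qed

lemma rank_le_card: "rank (X::'a::field^'n^'n) \<le> CARD('n)"
  using rank_ker[of X] by linarith

lemma rank_mult_int: "rank ((X::'a::field^'n^'n) ** (Y::'a^'n^'n)) + vec.dim (mat_im Y \<inter> mat_ker X) = rank Y"
proof -
  have "mat_im Y \<inter> mat_ker X = mat_im Y \<inter> {x. X *v x = 0}" by (simp add: mat_ker_def)
  then show ?thesis
    using rank_nullity_sub[OF subspace_mat_im, of X Y] by (simp add: rank_im mat_im_mult)
qed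

lemma list_prod_append: "list_prod A (xs @ ys) = list_prod A xs ** list_prod A ys"
  by (induction xs) (simp_all add: list_prod_def matrix_mul_assoc matrix_mul_lid)

lemma list_prod_Nil [simp]: "list_prod A [] = mat 1"
  by (simp add: list_prod_def)

lemma list_prod_Cons: "list_prod A (i # xs) = A i ** list_prod A xs"
  by (simp add: list_prod_def)

lemma list_prod_single [simp]: "list_prod A [i] = A i"
  by (simp add: list_prod_def matrix_mul_rid)

lemma mprod_split:
  assumes "i \<le> Suc k" "k \<le> j"
  shows "mprod A i j = mprod A i k ** mprod A (Suc k) j"
proof -
  have "[i..<Suc j] = [i..<Suc k] @ [Suc k..<Suc j]"
    using assms upt_add_eq_append[of i "Suc k" "j - k"] by simp
  then show ?thesis unfolding mprod_def by (simp add: list_prod_append)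
qed

lemma mprod_single [simp]: "mprod A i i = A i"
  by (simp add: mprod_def)

lemma mprod_empty: "j < i \<Longrightarrow> mprod A i j = mat 1"
  by (simp add: mprod_def)

lemma mprod_two: "mprod A i (Suc i) = A i ** A (Suc i)"
  by (simp add: mprod_def list_prod_def matrix_mul_rid)
definition fclosed :: "'a::field set \<Rightarrow> bool" where
  "fclosed F \<longleftrightarrow> 0 \<in> F \<and> 1 \<in> F \<and> (\<forall>x\<in>F. \<forall>y\<in>F. x + y \<in> F \<and> x * y \<in> F \<and> - x \<in> F) \<and>
     (\<forall>x\<in>F. x \<noteq> 0 \<longrightarrow> inverse x \<in> F)"

lemma fclosed_ops:
  assumes "fclosed F" "a \<in> F" "b \<in> F"
  shows "a + b \<in> F" "a * b \<in> F" "- a \<in> F" "a - b \<in> F" "0 \<in> F" "1 \<in> F"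
    "a \<noteq> 0 \<Longrightarrow> inverse a \<in> F"
  using assms unfolding fclosed_def diff_conv_add_uminus by blast+

lemma fclosed_sum:
  assumes "fclosed F" "\<forall>i\<in>I. g i \<in> F"
  shows "sum g I \<in> F"
proof (cases "finite I")
  case True
  then show ?thesis using assms(2)
    by (induction I rule: finite_induct) (use assms(1) in \<open>auto simp: fclosed_def\<close>)
next
  case False
  then show ?thesis using assms(1) by (simp add: fclosed_def)
qed

lemma fclosed_UNIV: "fclosed UNIV"
  by (simp add: fclosed_def)

lemma dep_lemma:
  fixes f :: "'i \<Rightarrow> 'b \<Rightarrow> 'a::field"
  assumes F: "fclosed F"
  shows "finite D \<Longrightarrow> finite I \<Longrightarrow> card D < card I \<Longrightarrow> (\<forall>i\<in>I. \<forall>x\<in>D. f i x \<in> F) \<Longrightarrow>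
    \<exists>c. (\<forall>i\<in>I. c i \<in> F) \<and> (\<exists>i\<in>I. c i \<noteq> 0) \<and> (\<forall>x\<in>D. (\<Sum>i\<in>I. c i * f i x) = 0)"
proof (induction D arbitrary: I f rule: finite_induct)
  case empty
  then obtain i0 where i0: "i0 \<in> I" by fastforce
  show ?case
    by (rule exI[of _ "\<lambda>i. if i = i0 then 1 else 0"]) (use i0 F in \<open>auto simp: fclosed_def\<close>)
next
  case (insert x D)
  show ?case
  proof (cases "\<forall>i\<in>I. f i x = 0")
    case True
    have "card D < card I" using insert by simp
    moreover have "\<forall>i\<in>I. \<forall>y\<in>D. f i y \<in> F" using insert.prems(3) by blast
    ultimately obtain c where c: "\<forall>i\<in>I. c i \<in> F" "\<exists>i\<in>I. c i \<noteq> 0" "\<forall>y\<in>D. (\<Sum>i\<in>I. c i * f i y) = 0"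
      using insert.IH[OF insert.prems(1)] by blast
    show ?thesis using c True by (intro exI[of _ c]) auto
  next
    case False
    then obtain j where j: "j \<in> I" "f j x \<noteq> 0" by blast
    define I' where "I' = I - {j}"
    define h where "h i y = f i y - (f i x * inverse (f j x)) * f j y" for i y
    have finI': "finite I'" using insert.prems I'_def by simp
    have cardI': "card D < card I'" using insert I'_def j by simp
    have Fj: "inverse (f j x) \<in> F" using j insert.prems F by (simp add: fclosed_def)
    have hF: "\<forall>i\<in>I'. \<forall>y\<in>D. h i y \<in> F"
    proof (intro ballI)
      fix i y assume "i \<in> I'" "y \<in> D"
      then have 1: "f i y \<in> F" and 2: "f i x \<in> F" and 3: "f j y \<in> F" using insert.prems j I'_def by auto
      have a1: "f i x * inverse (f j x) \<in> F" using fclosed_ops(2)[OF F 2 Fj] .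
      have a2: "f i x * inverse (f j x) * f j y \<in> F" using fclosed_ops(2)[OF F a1 3] .
      show "h i y \<in> F" unfolding h_def using fclosed_ops(4)[OF F 1 a2] .
    qed
    obtain c' where c': "\<forall>i\<in>I'. c' i \<in> F" "\<exists>i\<in>I'. c' i \<noteq> 0" "\<forall>y\<in>D. (\<Sum>i\<in>I'. c' i * h i y) = 0"
      using insert.IH[OF finI' cardI' hF] by blast
    define c where "c i = (if i = j then - (\<Sum>k\<in>I'. c' k * (f k x * inverse (f j x))) else c' i)" for i
    have key: "(\<Sum>i\<in>I. c i * f i y) = (\<Sum>i\<in>I'. c' i * h i y)" for y
    proof -
      have "(\<Sum>i\<in>I. c i * f i y) = c j * f j y + (\<Sum>i\<in>I'. c i * f i y)"
        unfolding I'_def using j insert.prems by (simp add: sum.remove)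
      also have "(\<Sum>i\<in>I'. c i * f i y) = (\<Sum>i\<in>I'. c' i * f i y)"
        by (rule sum.cong) (auto simp: c_def I'_def)
      also have "c j * f j y = - (\<Sum>k\<in>I'. c' k * (f k x * inverse (f j x)) * f j y)"
        by (simp add: c_def sum_distrib_right)
      finally show ?thesis
        by (simp add: h_def algebra_simps sum_subtractf)
    qed
    show ?thesis
    proof (intro exI[of _ c] conjI)
      show "\<forall>i\<in>I. c i \<in> F"
      proof
        fix i assume "i \<in> I"
        show "c i \<in> F"
        proof (cases "i = j")
          case True
          have "\<forall>k\<in>I'. c' k * (f k x * inverse (f j x)) \<in> F"
            using c'(1) insert.prems Fj F I'_def by (auto simp: fclosed_def)
          then have "(\<Sum>k\<in>I'. c' k * (f k x * inverse (f j x))) \<in> F" by (rule fclosed_sum[OF F])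
          then show ?thesis using True fclosed_ops(3)[OF F] by (simp add: c_def)
        next
          case False
          then show ?thesis using c'(1) \<open>i \<in> I\<close> by (simp add: c_def I'_def)
        qed
      qed
      show "\<exists>i\<in>I. c i \<noteq> 0" using c'(2) by (auto simp: c_def I'_def)
      show "\<forall>y\<in>insert x D. (\<Sum>i\<in>I. c i * f i y) = 0"
      proof
        fix y assume "y \<in> insert x D"
        then show "(\<Sum>i\<in>I. c i * f i y) = 0"
        proof
          assume "y = x"
          have "h i x = 0" for i using j by (simp add: h_def)
          then show ?thesis using key \<open>y = x\<close> by simp
        next
          assume "y \<in> D" then show ?thesis using key c'(3) by simp
        qed
      qed
    qed
  qed
qed
definition Fs :: "'n::finite set \<Rightarrow> ('n \<Rightarrow> 'n) set" where
  "Fs T = {f. (\<forall>i\<in>T. f i \<in> UNIV) \<and> (\<forall>i. i \<notin> T \<longrightarrow> f i = i)}"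

definition Emix :: "'n::finite set \<Rightarrow> ('n \<Rightarrow> 'a::field^'n) \<Rightarrow> ('n \<Rightarrow> 'n) \<Rightarrow> 'a" where
  "Emix T u f = det (\<chi> i. if i \<in> T then axis (f i) 1 else u i)"

definition gS :: "'n::finite set \<Rightarrow> 'n set \<Rightarrow> ('n \<Rightarrow> 'n)" where
  "gS T S = (SOME g. g \<in> Fs T \<and> inj_on g T \<and> g ` T = S)"

definition permf :: "'n::finite set \<Rightarrow> ('n \<Rightarrow> 'n) \<Rightarrow> ('n \<Rightarrow> 'n)" where
  "permf T f = (\<lambda>i. if i \<in> T then inv_into T (gS T (f ` T)) (f i) else i)"

definition Phi :: "'n::finite set \<Rightarrow> ('n \<Rightarrow> 'a::field^'n) \<Rightarrow> 'n set \<Rightarrow> 'a" where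
  "Phi T u S = Emix T u (gS T S)"

definition Psi :: "'n::finite set \<Rightarrow> ('n \<Rightarrow> 'a::field^'n) \<Rightarrow> 'n set \<Rightarrow> 'a" where
  "Psi T w S = (\<Sum>f \<in> {f \<in> Fs T. inj_on f T \<and> f ` T = S}. (\<Prod>i\<in>T. w i $ f i) * of_int (sign (permf T f)))"

lemma det_expand_T:
  fixes u w :: "'n::finite \<Rightarrow> 'a::field^'n"
  shows "det (\<chi> i. if i \<in> T then w i else u i) = (\<Sum>f\<in>Fs T. (\<Prod>i\<in>T. w i $ f i) * Emix T u f)"
proof -
  have e1: "(\<chi> i. if i \<in> T then w i else u i) = (\<chi> i. if i \<in> T then sum (\<lambda>j. (w i $ j) *s axis j 1) UNIV else u i)"
    by (rule Cart_lambda_cong) (simp only: basis_expansion)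
  have "det (\<chi> i. if i \<in> T then w i else u i) =
     (\<Sum>f\<in>Fs T. det (\<chi> i. if i \<in> T then (w i $ f i) *s axis (f i) 1 else u i))"
    unfolding e1 Fs_def by (rule det_linear_rows_sum_lemma) auto
  also have "\<dots> = (\<Sum>f\<in>Fs T. (\<Prod>i\<in>T. w i $ f i) * Emix T u f)"
  proof (rule sum.cong[OF refl])
    fix f
    have "(\<chi> i. if i \<in> T then (w i $ f i) *s axis (f i) 1 else u i) =
          (\<chi> i. (if i \<in> T then w i $ f i else 1) *s (if i \<in> T then axis (f i) 1 else u i))"
      by (rule Cart_lambda_cong) simp
    then have "det (\<chi> i. if i \<in> T then (w i $ f i) *s axis (f i) 1 else u i) =
       (\<Prod>i\<in>UNIV. if i \<in> T then w i $ f i else 1) * Emix T u f"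
      by (simp add: det_rows_mul Emix_def)
    also have "(\<Prod>i\<in>UNIV. if i \<in> T then w i $ f i else 1) = (\<Prod>i\<in>T. w i $ f i)"
      by (simp add: prod.If_cases)
    finally show "det (\<chi> i. if i \<in> T then (w i $ f i) *s axis (f i) 1 else u i) = (\<Prod>i\<in>T. w i $ f i) * Emix T u f" .
  qed
  finally show ?thesis .
qed

lemma Emix_noninj:
  assumes "\<not> inj_on f T"
  shows "Emix T (u::'n::finite \<Rightarrow> 'a::field^'n) f = 0"
proof -
  obtain i i' where ii: "i \<in> T" "i' \<in> T" "i \<noteq> i'" "f i = f i'" using assms unfolding inj_on_def by blast
  show ?thesis unfolding Emix_def
    by (rule det_identical_rows[OF ii(3)]) (simp add: row_def ii vec_eq_iff)
qed

lemma gS_props: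
  assumes "f \<in> Fs T" "inj_on f T"
  shows "gS T (f ` T) \<in> Fs T" "inj_on (gS T (f ` T)) T" "gS T (f ` T) ` T = f ` T"
proof -
  have "\<exists>g. g \<in> Fs T \<and> inj_on g T \<and> g ` T = f ` T" using assms by blast
  from someI_ex[OF this] show "gS T (f ` T) \<in> Fs T" "inj_on (gS T (f ` T)) T" "gS T (f ` T) ` T = f ` T"
    unfolding gS_def by blast+
qed

lemma Emix_inj:
  assumes f: "f \<in> Fs T" "inj_on f T"
  shows "Emix T (u::'n::finite \<Rightarrow> 'a::field^'n) f = of_int (sign (permf T f)) * Phi T u (f ` T)"
proof -
  define g where "g = gS T (f ` T)"
  have g: "g \<in> Fs T" "inj_on g T" "g ` T = f ` T" using gS_props[OF f] unfolding g_def by blast+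
  define p where "p = permf T f"
  have p_eq: "p i = (if i \<in> T then inv_into T g (f i) else i)" for i
    unfolding p_def permf_def g_def by simp
  have "bij_betw (inv_into T g \<circ> f) T T"
  proof (rule bij_betw_trans)
    show "bij_betw f T (f ` T)" using f(2) by (simp add: bij_betw_imageI)
    have "bij_betw g T (f ` T)" using g(2,3) by (metis bij_betw_imageI)
    then show "bij_betw (inv_into T g) (f ` T) T" by (rule bij_betw_inv_into)
  qed
  then have "bij_betw p T T"
    by (rule bij_betw_cong[THEN iffD1, rotated]) (simp add: p_eq)
  then have "p permutes T" by (rule bij_imp_permutes) (simp add: p_eq)
  then have pU: "p permutes UNIV" by (rule permutes_subset) simp
  define B where "B = (\<chi> i. if i \<in> T then axis (g i) 1 else u i)"
  have eq: "(\<chi> i. if i \<in> T then axis (f i) 1 else u i) = (\<chi> i. B $ p i)"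
  proof (rule Cart_lambda_cong)
    fix i
    show "(if i \<in> T then axis (f i) 1 else u i) = B $ p i"
    proof (cases "i \<in> T")
      case True
      have fi: "f i \<in> g ` T" using True g(3) by blast
      have "p i \<in> T" using True p_eq inv_into_into[OF fi] by simp
      moreover have "g (p i) = f i" using True p_eq f_inv_into_f[OF fi] by simp
      ultimately show ?thesis using True by (simp add: B_def)
    next
      case False
      then show ?thesis by (simp add: B_def p_eq)
    qed
  qed
  have dB: "det B = Phi T u (f ` T)"
    unfolding B_def Phi_def Emix_def g_def ..
  have "det (\<chi> i. B $ p i) = of_int (sign p) * det B" by (rule det_permute_rows[OF pU])
  then show ?thesis unfolding Emix_def eq dB p_def .
qed

lemma det_laplace:
  fixes u w :: "'n::finite \<Rightarrow> 'a::field^'n"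
  shows "det (\<chi> i. if i \<in> T then w i else u i) = (\<Sum>S\<in>{S. card S = card T}. Phi T u S * Psi T w S)"
proof -
  let ?c = "\<lambda>f. (\<Prod>i\<in>T. w i $ f i)"
  let ?G = "{f \<in> Fs T. inj_on f T}"
  have "det (\<chi> i. if i \<in> T then w i else u i) = (\<Sum>f\<in>Fs T. ?c f * Emix T u f)"
    by (rule det_expand_T)
  also have "\<dots> = (\<Sum>f\<in>?G. ?c f * Emix T u f)"
    by (rule sum.mono_neutral_right) (auto simp: Emix_noninj)
  also have "\<dots> = (\<Sum>f\<in>?G. Phi T u (f ` T) * (?c f * of_int (sign (permf T f))))"
    by (rule sum.cong) (auto simp: Emix_inj)
  also have "\<dots> = (\<Sum>S\<in>{S. card S = card T}. \<Sum>f\<in>{f \<in> ?G. f ` T = S}. Phi T u (f ` T) * (?c f * of_int (sign (permf T f))))"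
    by (rule sum.group[symmetric]) (auto simp: card_image)
  also have "\<dots> = (\<Sum>S\<in>{S. card S = card T}. Phi T u S * Psi T w S)"
  proof (rule sum.cong[OF refl])
    fix S
    have "(\<Sum>f\<in>{f \<in> ?G. f ` T = S}. Phi T u (f ` T) * (?c f * of_int (sign (permf T f)))) =
          (\<Sum>f\<in>{f \<in> Fs T. inj_on f T \<and> f ` T = S}. Phi T u S * (?c f * of_int (sign (permf T f))))"
      by (rule sum.cong) auto
    then show "(\<Sum>f\<in>{f \<in> ?G. f ` T = S}. Phi T u (f ` T) * (?c f * of_int (sign (permf T f)))) = Phi T u S * Psi T w S"
      by (simp add: Psi_def sum_distrib_left)
  qed
  finally show ?thesis .
qed
lemma det_nz_span: "det (M::'a::field^'n^'n) \<noteq> 0 \<longleftrightarrow> vec.span (rows M) = UNIV"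
proof -
  have "det M \<noteq> 0 \<longleftrightarrow> invertible M" by (simp add: invertible_det_nz)
  also have "\<dots> \<longleftrightarrow> (\<exists>B::'a^'n^'n. B ** M = mat 1)" by (rule invertible_left_inverse)
  also have "\<dots> \<longleftrightarrow> vec.span (rows M) = UNIV" by (rule matrix_left_invertible_span_rows_gen)
  finally show ?thesis .
qed

lemma full_iff_cart: "vec.dim (S::('a::field^'n) set) = CARD('n) \<longleftrightarrow> vec.span S = UNIV"
  using vec.dim_eq_full[of S] by (simp add: vec.dimension_def card_cart_basis)

lemma rows_lambda: "rows (\<chi> i. g i) = range g"
  by (auto simp: rows_def row_def vec_eq_iff)

lemma span_basis_on:
  assumes "vec.subspace U" "vec.dim U = card R" "finite R"
  shows "\<exists>u. vec.span ((u::'n \<Rightarrow> 'a::field^'m) ` R) = U"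
proof -
  obtain B where B: "B \<subseteq> U" "vec.independent B" "U \<subseteq> vec.span B" "card B = vec.dim U"
    using vec.basis_exists by blast
  have "finite B" using B(2) vec.independent_bound_general by blast
  then obtain h where h: "bij_betw h R B" using finite_same_card_bij[OF assms(3)] B(4) assms(2) by metis
  have "h ` R = B" using h bij_betw_imp_surj_on by blast
  moreover have "vec.span B = U" using B assms(1) vec.span_minimal vec.span_superset by blast
  ultimately show ?thesis by blast
qed

lemma det_mix_iff:
  fixes u w :: "'n::finite \<Rightarrow> 'a::field^'n"
  assumes U: "vec.subspace U" "vec.dim U = r" "vec.span (u ` (- T)) = U"
    and W: "vec.subspace W" "vec.dim W = CARD('n) - r" "vec.span (w ` T) = W"
    and r: "r \<le> CARD('n)"
  shows "det (\<chi> i. if i \<in> T then w i else u i) \<noteq> 0 \<longleftrightarrow> U \<inter> W = {0}"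
proof -
  have rg: "range (\<lambda>i. if i \<in> T then w i else u i) = u ` (- T) \<union> w ` T" by auto
  have sp: "vec.span (rows (\<chi> i. if i \<in> T then w i else u i)) = {x + y |x y. x \<in> U \<and> y \<in> W}"
    unfolding rows_lambda rg vec.span_Un U(3) W(3) ..
  have sub: "vec.subspace {x + y |x y. x \<in> U \<and> y \<in> W}" by (rule vec.subspace_sums[OF U(1) W(1)])
  have ds: "vec.dim {x + y |x y. x \<in> U \<and> y \<in> W} + vec.dim (U \<inter> W) = CARD('n)"
  proof -
    have "vec.dim {x + y |x y. x \<in> U \<and> y \<in> W} + vec.dim (U \<inter> W) = vec.dim U + vec.dim W"
      by (rule vec.dim_sums_Int[OF U(1) W(1)])
    then show ?thesis unfolding U(2) W(2) using r by linarith
  qed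
  have sp2: "vec.span {x + y |x y. x \<in> U \<and> y \<in> W} = {x + y |x y. x \<in> U \<and> y \<in> W}"
    by (rule vec.span_eq_iff[THEN iffD2, OF sub])
  have z: "vec.dim (U \<inter> W) = 0 \<longleftrightarrow> U \<inter> W = {0}"
  proof -
    have "0 \<in> U \<inter> W" using vec.subspace_0[OF U(1)] vec.subspace_0[OF W(1)] by simp
    then show ?thesis unfolding vec.dim_eq_0 by auto
  qed
  have "det (\<chi> i. if i \<in> T then w i else u i) \<noteq> 0 \<longleftrightarrow> vec.span {x + y |x y. x \<in> U \<and> y \<in> W} = UNIV"
    unfolding det_nz_span sp sp2 ..
  also have "\<dots> \<longleftrightarrow> vec.dim {x + y |x y. x \<in> U \<and> y \<in> W} = CARD('n)"
    by (rule full_iff_cart[symmetric])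
  also have "\<dots> \<longleftrightarrow> vec.dim (U \<inter> W) = 0" using ds by linarith
  also have "\<dots> \<longleftrightarrow> U \<inter> W = {0}" by (rule z)
  finally show ?thesis .
qed
lemma key_bound:
  fixes U W :: "nat \<Rightarrow> ('a::field^'n) set"
  assumes U: "\<forall>a<m. vec.subspace (U a) \<and> vec.dim (U a) = r"
    and W: "\<forall>a<m. vec.subspace (W a) \<and> vec.dim (W a) = CARD('n) - r"
    and r: "r \<le> CARD('n)"
    and diag: "\<forall>a<m. U a \<inter> W a = {0}"
    and off: "\<forall>a b. a < b \<longrightarrow> b < m \<longrightarrow> U b \<inter> W a \<noteq> {0}"
  shows "m \<le> CARD('n) choose r"
proof (rule ccontr)
  assume "\<not> m \<le> CARD('n) choose r"
  then have mgt: "CARD('n) choose r < m" by simp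
  obtain R :: "'n set" where R: "card R = r" using obtain_subset_with_card_n[of r "UNIV::'n set"] r by auto
  define T where "T = - R"
  have cardT: "card T = CARD('n) - r" unfolding T_def using R by (simp add: Compl_eq_Diff_UNIV card_Diff_subset)
  have "\<forall>b. \<exists>u. b < m \<longrightarrow> vec.span ((u::'n \<Rightarrow> 'a^'n) ` R) = U b"
  proof
    fix b show "\<exists>u. b < m \<longrightarrow> vec.span ((u::'n \<Rightarrow> 'a^'n) ` R) = U b"
      using span_basis_on[of "U b" R] U R by auto
  qed
  then obtain u where u: "\<And>b. b < m \<Longrightarrow> vec.span ((u b :: 'n \<Rightarrow> 'a^'n) ` R) = U b" by metis
  have "\<forall>a. \<exists>w. a < m \<longrightarrow> vec.span ((w::'n \<Rightarrow> 'a^'n) ` T) = W a"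
  proof
    fix a show "\<exists>w. a < m \<longrightarrow> vec.span ((w::'n \<Rightarrow> 'a^'n) ` T) = W a"
      using span_basis_on[of "W a" T] W cardT by auto
  qed
  then obtain w where w: "\<And>a. a < m \<Longrightarrow> vec.span ((w a :: 'n \<Rightarrow> 'a^'n) ` T) = W a" by metis
  define M where "M a b = det (\<chi> i. if i \<in> T then w a i else u b i)" for a b
  have RT: "- T = R" unfolding T_def by simp
  have Miff: "M a b \<noteq> 0 \<longleftrightarrow> U b \<inter> W a = {0}" if "a < m" "b < m" for a b
    unfolding M_def using det_mix_iff[of "U b" r "u b" T "W a" "w a"] U W u w that r RT by simp
  define D where "D = {S::'n set. card S = card T}"
  have cardD: "card D = CARD('n) choose r"
  proof -
    have "card D = CARD('n) choose card T" unfolding D_def using n_subsets[of "UNIV::'n set" "card T"] by simp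
    then show ?thesis using cardT binomial_symmetric[OF r] by simp
  qed
  obtain c where c: "\<exists>b\<in>{..<m}. c b \<noteq> 0" "\<forall>S\<in>D. (\<Sum>b\<in>{..<m}. c b * Phi T (u b) S) = 0"
    using dep_lemma[OF fclosed_UNIV, of D "{..<m}" "\<lambda>b S. Phi T (u b) S"] cardD mgt by auto
  have zero: "(\<Sum>b<m. c b * M a b) = 0" for a
  proof -
    have "(\<Sum>b<m. c b * M a b) = (\<Sum>b<m. c b * (\<Sum>S\<in>D. Phi T (u b) S * Psi T (w a) S))"
      unfolding M_def D_def by (simp add: det_laplace)
    also have "\<dots> = (\<Sum>b<m. \<Sum>S\<in>D. c b * (Phi T (u b) S * Psi T (w a) S))"
      by (simp only: sum_distrib_left)
    also have "\<dots> = (\<Sum>S\<in>D. \<Sum>b<m. c b * (Phi T (u b) S * Psi T (w a) S))"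
      by (rule sum.swap)
    also have "\<dots> = (\<Sum>S\<in>D. Psi T (w a) S * (\<Sum>b<m. c b * Phi T (u b) S))"
      by (simp only: sum_distrib_left mult.assoc mult.commute mult.left_commute)
    also have "\<dots> = 0" using c(2) by simp
    finally show ?thesis .
  qed
  define b0 where "b0 = (LEAST b. b < m \<and> c b \<noteq> 0)"
  have b0: "b0 < m" "c b0 \<noteq> 0" using c(1) LeastI_ex[of "\<lambda>b. b < m \<and> c b \<noteq> 0"] unfolding b0_def by auto
  have lt: "c b = 0" if "b < b0" for b
    using not_less_Least[of b "\<lambda>b. b < m \<and> c b \<noteq> 0"] that b0 unfolding b0_def by auto
  have "(\<Sum>b<m. c b * M b0 b) = (\<Sum>b<m. if b0 = b then c b0 * M b0 b0 else 0)"
  proof (rule sum.cong[OF refl])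
    fix b assume "b \<in> {..<m}"
    show "c b * M b0 b = (if b0 = b then c b0 * M b0 b0 else 0)"
    proof (cases "b < b0")
      case True then show ?thesis using lt by simp
    next
      case False
      show ?thesis
      proof (cases "b = b0")
        case False
        then have "b0 < b" using \<open>\<not> b < b0\<close> by simp
        then have "M b0 b = 0" using Miff[of b0 b] off b0 \<open>b \<in> {..<m}\<close> by auto
        then show ?thesis using False by simp
      qed simp
    qed
  qed
  also have "\<dots> = c b0 * M b0 b0" using b0 by simp
  finally have "c b0 * M b0 b0 = 0" using zero[of b0] by simp
  moreover have "M b0 b0 \<noteq> 0" using Miff[of b0 b0] diag b0 by auto
  ultimately show False using b0 by simp
qed
primrec mpw :: "'a::semiring_1^'n^'n \<Rightarrow> nat \<Rightarrow> 'a^'n^'n" where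
  "mpw C 0 = mat 1"
| "mpw C (Suc k) = C ** mpw C k"

definition qv :: "'a::semiring_1^'n^'n \<Rightarrow> (nat \<Rightarrow> 'a) \<Rightarrow> nat \<Rightarrow> 'a^'n^'n" where
  "qv C c M = (\<Sum>k<M. mat (c k) ** mpw C k)"

lemma sum_mat_entry: "(\<Sum>k\<in>S. (Y k :: 'a::semiring_1^'n^'m)) $ i $ j = (\<Sum>k\<in>S. Y k $ i $ j)"
  by (simp add: sum_component)

lemma mat_scal_entry: "(mat c ** (X::'a::semiring_1^'n^'n)) $ i $ j = c * X $ i $ j"
proof -
  have "(mat c ** X) $ i $ j = (\<Sum>k\<in>UNIV. (if i = k then c else 0) * X $ k $ j)"
    by (simp add: matrix_matrix_mult_def mat_def)
  also have "\<dots> = (\<Sum>k\<in>UNIV. if i = k then c * X $ k $ j else 0)"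
    by (rule sum.cong) auto
  finally show ?thesis by simp
qed

lemma mat_scal_entry2: "((X::'a::comm_semiring_1^'n^'n) ** mat c) $ i $ j = c * X $ i $ j"
proof -
  have "(X ** mat c) $ i $ j = (\<Sum>k\<in>UNIV. X $ i $ k * (if k = j then c else 0))"
    by (simp add: matrix_matrix_mult_def mat_def)
  also have "\<dots> = (\<Sum>k\<in>UNIV. if j = k then c * X $ i $ k else 0)"
    by (rule sum.cong) (auto simp: mult.commute)
  finally show ?thesis by simp
qed

lemma mat_scal_comm: "mat c ** (X::'a::comm_semiring_1^'n^'n) = X ** mat c"
  by (simp add: vec_eq_iff mat_scal_entry mat_scal_entry2)

lemma mul_sum_left: "(X::'a::comm_semiring_1^'n^'n) ** (\<Sum>k\<in>S. Y k) = (\<Sum>k\<in>S. X ** Y k)"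
proof -
  have "(X ** (\<Sum>k\<in>S. Y k)) $ i $ j = (\<Sum>k\<in>S. X ** Y k) $ i $ j" for i j
  proof -
    have "(X ** (\<Sum>k\<in>S. Y k)) $ i $ j = (\<Sum>l\<in>UNIV. X $ i $ l * (\<Sum>k\<in>S. Y k $ l $ j))"
      by (simp add: matrix_matrix_mult_def sum_mat_entry)
    also have "\<dots> = (\<Sum>k\<in>S. \<Sum>l\<in>UNIV. X $ i $ l * Y k $ l $ j)"
      by (simp add: sum_distrib_left sum.swap[of _ S])
    also have "\<dots> = (\<Sum>k\<in>S. X ** Y k) $ i $ j"
      by (simp add: matrix_matrix_mult_def sum_mat_entry)
    finally show ?thesis .
  qed
  then show ?thesis by (simp add: vec_eq_iff)
qed

lemma mpw_comm: "C ** mpw C k = mpw C k ** (C::'a::semiring_1^'n^'n)"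
  by (induction k) (simp_all add: matrix_mul_lid matrix_mul_rid matrix_mul_assoc)

lemma qv_comm: "C ** qv C c M = qv C c M ** (C::'a::comm_semiring_1^'n^'n)"
proof -
  have "C ** qv C c M = (\<Sum>k<M. C ** (mat (c k) ** mpw C k))" by (simp add: qv_def mul_sum_left)
  also have "\<dots> = (\<Sum>k<M. (mat (c k) ** mpw C k) ** C)"
    by (rule sum.cong[OF refl]) (metis matrix_mul_assoc mat_scal_comm mpw_comm)
  also have "\<dots> = qv C c M ** C"
    by (simp add: qv_def vec_eq_iff sum_mat_entry matrix_matrix_mult_def sum_distrib_right sum.swap[of _ "{..<M}"])
  finally show ?thesis .
qed

lemma qv_Suc: "qv C c (Suc M) = mat (c 0) + C ** qv C (\<lambda>k. c (Suc k)) M"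
  for C :: "'a::comm_semiring_1^'n^'n"
proof -
  have "qv C c (Suc M) = mat (c 0) ** mpw C 0 + (\<Sum>k<M. mat (c (Suc k)) ** mpw C (Suc k))"
    unfolding qv_def by (rule sum.lessThan_Suc_shift)
  also have "(\<Sum>k<M. mat (c (Suc k)) ** mpw C (Suc k)) = (\<Sum>k<M. C ** (mat (c (Suc k)) ** mpw C k))"
    by (rule sum.cong[OF refl]) (metis matrix_mul_assoc mat_scal_comm mpw.simps(2))
  finally show ?thesis by (simp add: qv_def mul_sum_left matrix_mul_rid)
qed

definition kclosed_mat :: "complex set \<Rightarrow> complex^'n^'n \<Rightarrow> bool" where
  "kclosed_mat K M \<longleftrightarrow> (\<forall>i j. M $ i $ j \<in> K)"

lemma mat_over_mult:
  assumes "fclosed K" "mat_over K X" "mat_over K Y"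
  shows "mat_over K (X ** Y)"
  using assms unfolding mat_over_def matrix_matrix_mult_def
  by (auto intro!: fclosed_sum fclosed_ops(2))

lemma mat_over_mat:
  assumes "fclosed K" "c \<in> K"
  shows "mat_over K (mat c)"
  using assms unfolding mat_over_def mat_def by (auto simp: fclosed_def)

lemma mat_over_sum:
  assumes "fclosed K" "\<forall>k\<in>S. mat_over K (Y k)"
  shows "mat_over K (\<Sum>k\<in>S. Y k)"
  using assms unfolding mat_over_def sum_mat_entry by (auto intro!: fclosed_sum)

lemma mat_over_mpw:
  assumes "fclosed K" "mat_over K C"
  shows "mat_over K (mpw C k)"
  by (induction k) (use assms in \<open>auto intro: mat_over_mult mat_over_mat simp: fclosed_def\<close>)

lemma mat_over_qv:
  assumes "fclosed K" "mat_over K C" "\<forall>k. c k \<in> K"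
  shows "mat_over K (qv C c M)"
  unfolding qv_def using assms
  by (intro mat_over_sum) (auto intro!: mat_over_mult mat_over_mat mat_over_mpw)

lemma index1_cancel:
  assumes int: "mat_im C \<inter> mat_ker C = {0}" and eq: "C ** (C ** Y) = 0"
  shows "C ** Y = (0::'a::field^'n^'n)"
proof -
  have "(C ** Y) *v v = 0" for v
  proof -
    have "(C ** Y) *v v = C *v (Y *v v)" by (simp add: matrix_vector_mul_assoc)
    then have "(C ** Y) *v v \<in> mat_im C" by (simp add: mat_im_def)
    moreover have "C *v ((C ** Y) *v v) = 0"
      using eq by (metis matrix_vector_mul_assoc matrix_vector_mult_0)
    then have "(C ** Y) *v v \<in> mat_ker C" by (simp add: mat_ker_def)
    ultimately show ?thesis using int by blast
  qed
  then show ?thesis by (simp add: matrix_eq)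
qed
lemma scal_pull: "(X::'a::comm_semiring_1^'n^'n) ** (mat k ** Y) = mat k ** (X ** Y)"
proof -
  have "X ** (mat k ** Y) = (X ** mat k) ** Y" by (simp only: matrix_mul_assoc)
  also have "\<dots> = (mat k ** X) ** Y" by (simp only: mat_scal_comm)
  also have "\<dots> = mat k ** (X ** Y)" by (simp only: matrix_mul_assoc)
  finally show ?thesis .
qed

lemma poly_rel:
  fixes C :: "complex^'n^'n" and M :: nat
  assumes K: "fclosed K" and CK: "mat_over K C" and int: "mat_im C \<inter> mat_ker C = {0}"
  shows "\<forall>c. (\<forall>k. c k \<in> K) \<longrightarrow> (\<exists>k<M. c k \<noteq> 0) \<longrightarrow> C ** qv C c M = 0 \<longrightarrow>
           (\<exists>P. mat_over K P \<and> C ** P = P ** C \<and> C ** (C ** P) = C)"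
proof (induction M)
  case 0
  then show ?case by simp
next
  case (Suc M)
  show ?case
  proof (intro allI impI)
    fix c :: "nat \<Rightarrow> complex"
    assume cK: "\<forall>k. c k \<in> K" and nz: "\<exists>k<Suc M. c k \<noteq> 0" and z: "C ** qv C c (Suc M) = 0"
    define Q where "Q = qv C (\<lambda>k. c (Suc k)) M"
    have QK: "mat_over K Q" unfolding Q_def using mat_over_qv[OF K CK] cK by simp
    have Qc: "C ** Q = Q ** C" unfolding Q_def by (rule qv_comm)
    have z2: "C ** mat (c 0) + C ** (C ** Q) = 0"
      using z unfolding qv_Suc Q_def[symmetric] by (simp add: matrix_add_ldistrib)
    show "\<exists>P. mat_over K P \<and> C ** P = P ** C \<and> C ** (C ** P) = C"
    proof (cases "c 0 = 0")
      case True
      then have "C ** (C ** Q) = 0" using z2 by simp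
      then have CQ: "C ** Q = 0" by (rule index1_cancel[OF int])
      obtain k where k: "k < Suc M" "c k \<noteq> 0" using nz by blast
      then obtain k' where "k = Suc k'" using True by (cases k) auto
      then have "\<exists>k<M. c (Suc k) \<noteq> 0" using k by auto
      moreover have "\<forall>k. c (Suc k) \<in> K" using cK by blast
      ultimately show ?thesis using Suc.IH[rule_format, of "\<lambda>k. c (Suc k)"] CQ unfolding Q_def by blast
    next
      case False
      define P where "P = mat (- inverse (c 0)) ** Q"
      have ic: "- inverse (c 0) \<in> K" using K cK False by (auto simp: fclosed_def)
      have PK: "mat_over K P" unfolding P_def using mat_over_mult[OF K mat_over_mat[OF K ic] QK] .
      have PC: "C ** P = P ** C"
      proof -
        have "C ** P = mat (- inverse (c 0)) ** (C ** Q)" unfolding P_def by (rule scal_pull)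
        also have "\<dots> = mat (- inverse (c 0)) ** (Q ** C)" by (simp only: Qc)
        also have "\<dots> = P ** C" unfolding P_def by (simp only: matrix_mul_assoc)
        finally show ?thesis .
      qed
      have CCQ: "C ** (C ** Q) = - (mat (c 0) ** C)"
      proof -
        have "C ** mat (c 0) = mat (c 0) ** C" by (simp only: mat_scal_comm)
        then have "mat (c 0) ** C + C ** (C ** Q) = 0" using z2 by simp
        then show ?thesis by (simp add: eq_neg_iff_add_eq_0 add.commute)
      qed
      have "C ** (C ** P) = mat (- inverse (c 0)) ** (- (mat (c 0) ** C))"
        unfolding P_def scal_pull CCQ ..
      also have "\<dots> = C"
        using False by (simp add: vec_eq_iff mat_scal_entry)
      finally show ?thesis using PK PC by blast
    qed
  qed
qed

lemma exists_P:
  fixes C :: "complex^'n^'n"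
  assumes K: "fclosed K" and CK: "mat_over K C" and int: "mat_im C \<inter> mat_ker C = {0}"
  shows "\<exists>P. mat_over K P \<and> C ** P = P ** C \<and> C ** (C ** P) = C"
proof -
  let ?D = "UNIV :: ('n \<times> 'n) set"
  let ?M = "Suc (card ?D)"
  define f where "f k p = (mpw C (Suc k) $ fst p $ snd p :: complex)" for k :: nat and p :: "'n \<times> 'n"
  have fK: "\<forall>k\<in>{..<?M}. \<forall>p\<in>?D. f k p \<in> K"
    using mat_over_mpw[OF K CK] unfolding f_def mat_over_def by blast
  obtain c where c: "\<forall>k\<in>{..<?M}. c k \<in> K" "\<exists>k\<in>{..<?M}. c k \<noteq> 0"
      "\<forall>p\<in>?D. (\<Sum>k\<in>{..<?M}. c k * f k p) = 0"
    using dep_lemma[OF K, of ?D "{..<?M}" f] fK by auto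
  define c' where "c' k = (if k < ?M then c k else 0)" for k
  have c'K: "\<forall>k. c' k \<in> K" using c(1) K by (auto simp: c'_def fclosed_def)
  have c'nz: "\<exists>k<?M. c' k \<noteq> 0" using c(2) by (auto simp: c'_def)
  have "C ** qv C c' ?M = (\<Sum>k<?M. mat (c' k) ** mpw C (Suc k))"
    unfolding qv_def mul_sum_left by (simp add: scal_pull)
  also have "\<dots> = 0"
  proof -
    have "(\<Sum>k<?M. mat (c' k) ** mpw C (Suc k)) $ i $ j = 0" for i j
    proof -
      have "(\<Sum>k<?M. mat (c' k) ** mpw C (Suc k)) $ i $ j = (\<Sum>k<?M. c k * f k (i, j))"
        unfolding sum_mat_entry mat_scal_entry f_def by (rule sum.cong) (auto simp: c'_def)
      also have "\<dots> = 0" using c(3) by blast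
      finally show ?thesis .
    qed
    then show ?thesis by (simp add: vec_eq_iff)
  qed
  finally have "C ** qv C c' ?M = 0" .
  then show ?thesis using poly_rel[OF K CK int] c'K c'nz by blast
qed

lemma number_field_fclosed: "number_field K \<Longrightarrow> fclosed K"
  unfolding number_field_def fclosed_def by blast

lemma cpr_of_index1:
  fixes C :: "complex^'n^'n"
  assumes NK: "number_field K" and CK: "mat_over K C" and int: "mat_im C \<inter> mat_ker C = {0}"
  shows "completely_pseudo_regular K C"
proof -
  have K: "fclosed K" using NK by (rule number_field_fclosed)
  obtain P where P: "mat_over K P" "C ** P = P ** C" "C ** (C ** P) = C"
    using exists_P[OF K CK int] by blast
  define e where "e = C ** P"
  define Y where "Y = C ** (P ** P)"
  have eK: "mat_over K e" unfolding e_def by (rule mat_over_mult[OF K CK P(1)])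
  have YK: "mat_over K Y" unfolding Y_def by (intro mat_over_mult[OF K CK] mat_over_mult[OF K P(1) P(1)])
  have PC: "P ** C = C ** P" using P(2) by simp
  have CCP: "C ** (C ** P) = C" by (rule P(3))
  have CPC: "C ** P ** C = C"
  proof -
    have "C ** P ** C = C ** (P ** C)" by (simp only: matrix_mul_assoc)
    also have "\<dots> = C ** (C ** P)" by (simp only: PC)
    finally show ?thesis using CCP by simp
  qed
  have ee: "e ** e = e"
  proof -
    have "e ** e = (C ** P ** C) ** P" unfolding e_def by (simp only: matrix_mul_assoc)
    then show ?thesis using CPC e_def by simp
  qed
  have eC: "e ** C = C" unfolding e_def by (rule CPC)
  have Ce: "C ** e = C" unfolding e_def by (rule CCP)
  have CY: "C ** Y = e"
  proof -
    have "C ** Y = (C ** (C ** P)) ** P" unfolding Y_def by (simp only: matrix_mul_assoc)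
    then show ?thesis using CCP e_def by simp
  qed
  have YC: "Y ** C = e"
  proof -
    have "Y ** C = C ** (P ** (P ** C))" unfolding Y_def by (simp only: matrix_mul_assoc)
    also have "\<dots> = C ** (P ** (C ** P))" by (simp only: PC)
    also have "\<dots> = C ** ((P ** C) ** P)" by (simp only: matrix_mul_assoc)
    also have "\<dots> = C ** ((C ** P) ** P)" by (simp only: PC)
    also have "\<dots> = (C ** (C ** P)) ** P" by (simp only: matrix_mul_assoc)
    finally show ?thesis using CCP e_def by simp
  qed
  have eY: "e ** Y = Y"
  proof -
    have "e ** Y = (C ** P ** C) ** (P ** P)" unfolding Y_def e_def by (simp only: matrix_mul_assoc)
    then show ?thesis using CPC Y_def by simp
  qed
  have Ye: "Y ** e = Y"
  proof -
    have "Y ** e = C ** (P ** ((P ** C) ** P))" unfolding Y_def e_def by (simp only: matrix_mul_assoc)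
    also have "\<dots> = C ** (P ** ((C ** P) ** P))" by (simp only: PC)
    also have "\<dots> = ((C ** (P ** C)) ** P) ** P" by (simp only: matrix_mul_assoc)
    also have "\<dots> = ((C ** (C ** P)) ** P) ** P" by (simp only: PC)
    also have "\<dots> = C ** (P ** P)" using CCP by (simp only: matrix_mul_assoc)
    finally show ?thesis unfolding Y_def .
  qed
  define G where "G = {M. mat_over K M \<and> e ** M = M \<and> M ** e = M \<and>
      (\<exists>N. mat_over K N \<and> e ** N = N \<and> N ** e = N \<and> M ** N = e \<and> N ** M = e)}"
  show ?thesis unfolding completely_pseudo_regular_def
  proof (intro exI[of _ G] exI[of _ e] conjI)
    show "\<forall>M\<in>G. mat_over K M" unfolding G_def by blast
    show "C \<in> G" unfolding G_def using CK eC Ce YK eY Ye CY YC by blast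
    show "e \<in> G" unfolding G_def using eK ee by blast
    show "\<forall>x\<in>G. \<forall>y\<in>G. x ** y \<in> G"
    proof (intro ballI)
      fix x y assume "x \<in> G" "y \<in> G"
      then obtain Nx Ny where x: "mat_over K x" "e ** x = x" "x ** e = x" "mat_over K Nx" "e ** Nx = Nx" "Nx ** e = Nx" "x ** Nx = e" "Nx ** x = e"
        and y: "mat_over K y" "e ** y = y" "y ** e = y" "mat_over K Ny" "e ** Ny = Ny" "Ny ** e = Ny" "y ** Ny = e" "Ny ** y = e"
        unfolding G_def by blast
      have 1: "mat_over K (x ** y)" by (rule mat_over_mult[OF K x(1) y(1)])
      have 2: "mat_over K (Ny ** Nx)" by (rule mat_over_mult[OF K y(4) x(4)])
      have 3: "e ** (x ** y) = x ** y" using x(2) by (simp add: matrix_mul_assoc)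
      have 4: "(x ** y) ** e = x ** y" using y(3) by (simp add: matrix_mul_assoc[symmetric])
      have 5: "e ** (Ny ** Nx) = Ny ** Nx" using y(5) by (simp add: matrix_mul_assoc)
      have 6: "(Ny ** Nx) ** e = Ny ** Nx" using x(6) by (simp add: matrix_mul_assoc[symmetric])
      have 7: "(x ** y) ** (Ny ** Nx) = e"
      proof -
        have "(x ** y) ** (Ny ** Nx) = x ** ((y ** Ny) ** Nx)" by (simp only: matrix_mul_assoc)
        also have "\<dots> = x ** Nx" using y(7) x(5) by simp
        finally show ?thesis using x(7) by simp
      qed
      have 8: "(Ny ** Nx) ** (x ** y) = e"
      proof -
        have "(Ny ** Nx) ** (x ** y) = Ny ** ((Nx ** x) ** y)" by (simp only: matrix_mul_assoc)
        also have "\<dots> = Ny ** y" using x(8) y(2) by simp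
        finally show ?thesis using y(8) by simp
      qed
      show "x ** y \<in> G" unfolding G_def using 1 2 3 4 5 6 7 8 by blast
    qed
    show "\<forall>x\<in>G. e ** x = x \<and> x ** e = x" unfolding G_def by blast
    show "\<forall>x\<in>G. \<exists>y\<in>G. x ** y = e \<and> y ** x = e"
    proof
      fix x assume "x \<in> G"
      then obtain N where x: "mat_over K x" "e ** x = x" "x ** e = x" and
        N: "mat_over K N" "e ** N = N" "N ** e = N" "x ** N = e" "N ** x = e"
        unfolding G_def by blast
      have "N \<in> G" unfolding G_def using x N by blast
      then show "\<exists>y\<in>G. x ** y = e \<and> y ** x = e" using N by blast
    qed
  qed
qed
lemma mat_over_list_prod:
  assumes K: "fclosed K" and "\<forall>i\<in>set is. mat_over K (A i)"
  shows "mat_over K (list_prod A is)"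
  using assms(2)
proof (induction "is")
  case Nil
  then show ?case using mat_over_mat[OF K, of 1] K by (simp add: fclosed_def)
next
  case (Cons i xs)
  then show ?case by (simp add: list_prod_Cons mat_over_mult[OF K])
qed

lemma sorted_take_drop:
  assumes "sorted_wrt (<) (js::nat list)" "a \<le> b"
  shows "sorted_wrt (<) (take a js @ drop b js)"
proof -
  have s: "sorted_wrt (<) (take b js @ drop b js)" using assms(1) by simp
  have "set (take a js) \<subseteq> set (take b js)" using assms(2) by (rule set_take_subset_set_take)
  then show ?thesis using s assms(1) unfolding sorted_wrt_append
    by (auto intro: sorted_wrt_take sorted_wrt_drop)
qed

context
  fixes A :: "nat \<Rightarrow> complex^'d^'d" and n r :: nat
  assumes n1: "n \<ge> 1" and rA: "rank (mprod A 1 n) = r"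
    and rp: "\<forall>i\<in>{1..n-1}. rank (A i ** A (i + 1)) = r"
begin

lemma rk:
  assumes "1 \<le> i" "i < j" "j \<le> n"
  shows "rank (mprod A i j) = r"
proof -
  have s1: "mprod A i j = mprod A i (Suc i) ** mprod A (Suc (Suc i)) j"
    using assms by (intro mprod_split) auto
  have "rank (mprod A i (Suc i)) = r" using rp assms by (simp add: mprod_two)
  then have up: "rank (mprod A i j) \<le> r" using s1 rank_mult_le_left by metis
  have s2: "mprod A 1 n = mprod A 1 (i - 1) ** mprod A i n"
    using mprod_split[of 1 "i - 1" n A] assms by simp
  have s3: "mprod A i n = mprod A i j ** mprod A (Suc j) n"
    using assms by (intro mprod_split) auto
  have "r \<le> rank (mprod A i n)" using s2 rA rank_mult_le_right by metis
  also have "\<dots> \<le> rank (mprod A i j)" using s3 rank_mult_le_left by metis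
  finally show ?thesis using up by simp
qed

lemma r_le: "r \<le> CARD('d)"
  using rank_le_card[of "mprod A 1 n"] rA by simp

lemma im_eq:
  assumes "1 \<le> i" "i < j" "j \<le> n"
  shows "mat_im (mprod A i j) = mat_im (mprod A i (Suc i))"
proof (rule vec.subspace_dim_equal[OF subspace_mat_im subspace_mat_im])
  have "mprod A i j = mprod A i (Suc i) ** mprod A (Suc (Suc i)) j"
    using assms by (intro mprod_split) auto
  then show "mat_im (mprod A i j) \<subseteq> mat_im (mprod A i (Suc i))" using mat_im_mult_sub by metis
  show "vec.dim (mat_im (mprod A i (Suc i))) \<le> vec.dim (mat_im (mprod A i j))"
    using rk[of i j] rk[of i "Suc i"] assms by (simp add: rank_im[symmetric])
qed

lemma ker_eq:
  assumes "1 \<le> i" "i < j" "j \<le> n"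
  shows "mat_ker (mprod A i j) = mat_ker (mprod A (j - 1) j)"
proof (rule vec.subspace_dim_equal[OF subspace_mat_ker subspace_mat_ker, symmetric])
  have "mprod A i j = mprod A i (j - 2) ** mprod A (Suc (j - 2)) j"
    using assms by (intro mprod_split) auto
  moreover have "Suc (j - 2) = j - 1" using assms by simp
  ultimately have "mprod A i j = mprod A i (j - 2) ** mprod A (j - 1) j" by simp
  then show "mat_ker (mprod A (j - 1) j) \<subseteq> mat_ker (mprod A i j)" using mat_ker_mult_sub by metis
  have "rank (mprod A i j) = r" "rank (mprod A (j - 1) j) = r" using rk assms by auto
  then show "vec.dim (mat_ker (mprod A i j)) \<le> vec.dim (mat_ker (mprod A (j - 1) j))"
    using rank_ker[of "mprod A i j"] rank_ker[of "mprod A (j - 1) j"] by simp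
qed

lemma int_zero_of_rank:
  assumes "rank ((X::complex^'d^'d) ** Y) = rank Y"
  shows "mat_im Y \<inter> mat_ker X = {0}"
proof -
  have "vec.dim (mat_im Y \<inter> mat_ker X) = 0" using rank_mult_int[of X Y] assms by simp
  then have "mat_im Y \<inter> mat_ker X \<subseteq> {0}" by (simp only: vec.dim_eq_0)
  moreover have "0 \<in> mat_im Y \<inter> mat_ker X"
    using vec.subspace_0[OF subspace_mat_im[of Y]] vec.subspace_0[OF subspace_mat_ker[of X]] by simp
  ultimately show ?thesis by blast
qed

lemma int_nonzero_of_rank:
  assumes "rank ((X::complex^'d^'d) ** Y) \<noteq> rank Y"
  shows "mat_im Y \<inter> mat_ker X \<noteq> {0}"
proof
  assume h: "mat_im Y \<inter> mat_ker X = {0}"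
  have "vec.dim (mat_im Y \<inter> mat_ker X) = 0" unfolding vec.dim_eq_0 using h by simp
  then show False using rank_mult_int[of X Y] assms by linarith
qed

end

context
  fixes A :: "nat \<Rightarrow> complex^'d^'d" and n r :: nat
  assumes n1: "n \<ge> 1" and rA: "rank (mprod A 1 n) = r"
    and rp: "\<forall>i\<in>{1..n-1}. rank (A i ** A (i + 1)) = r"
begin

lemma rk': "1 \<le> i \<Longrightarrow> i < j \<Longrightarrow> j \<le> n \<Longrightarrow> rank (mprod A i j) = r"
  using rk[OF n1 rA rp] .
lemma im_eq': "1 \<le> i \<Longrightarrow> i < j \<Longrightarrow> j \<le> n \<Longrightarrow> mat_im (mprod A i j) = mat_im (mprod A i (Suc i))"
  using im_eq[OF n1 rA rp] .
lemma ker_eq': "1 \<le> i \<Longrightarrow> i < j \<Longrightarrow> j \<le> n \<Longrightarrow> mat_ker (mprod A i j) = mat_ker (mprod A (j - 1) j)"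
  using ker_eq[OF n1 rA rp] .
lemma r_le': "r \<le> CARD('d)"
  using r_le[OF n1 rA rp] .

lemma part2:
  assumes NK: "number_field K" and AK: "\<forall>i\<in>{1..n}. mat_over K (A i)"
    and nb: "n \<ge> 2 * (CARD('d) choose r) + 4"
  shows "\<exists>k l. 1 \<le> k \<and> k < l \<and> l \<le> n \<and> completely_pseudo_regular K (mprod A k l) \<and> rank (mprod A k l) = r"
proof (rule ccontr)
  assume no: "\<not> ?thesis"
  have K: "fclosed K" using NK by (rule number_field_fclosed)
  have nz: "mat_im (mprod A k l) \<inter> mat_ker (mprod A k l) \<noteq> {0}" if "1 \<le> k" "k < l" "l \<le> n" for k l
  proof
    assume h: "mat_im (mprod A k l) \<inter> mat_ker (mprod A k l) = {0}"
    have "mat_over K (mprod A k l)" unfolding mprod_def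
      using that AK by (intro mat_over_list_prod[OF K]) auto
    then have "completely_pseudo_regular K (mprod A k l)" using cpr_of_index1[OF NK _ h] by blast
    then show False using no that rk'[OF that] by blast
  qed
  define m where "m = (CARD('d) choose r) + 1"
  define U where "U a = mat_im (mprod A (2 * (m - a) + 1) (2 * (m - a) + 2))" for a
  define W where "W a = mat_ker (mprod A (2 * (m - a) - 1) (2 * (m - a)))" for a
  have "m \<le> CARD('d) choose r"
  proof (rule key_bound[of m U r W])
    show "\<forall>a<m. vec.subspace (U a) \<and> vec.dim (U a) = r"
    proof (intro allI impI conjI)
      fix a assume "a < m"
      show "vec.subspace (U a)" unfolding U_def by (rule subspace_mat_im)
      have "rank (mprod A (2 * (m - a) + 1) (2 * (m - a) + 2)) = r"
        using \<open>a < m\<close> nb unfolding m_def by (intro rk') auto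
      then show "vec.dim (U a) = r" unfolding U_def by (simp add: rank_im)
    qed
    show "\<forall>a<m. vec.subspace (W a) \<and> vec.dim (W a) = CARD('d) - r"
    proof (intro allI impI conjI)
      fix a assume "a < m"
      show "vec.subspace (W a)" unfolding W_def by (rule subspace_mat_ker)
      have "rank (mprod A (2 * (m - a) - 1) (2 * (m - a))) = r"
        using \<open>a < m\<close> nb unfolding m_def by (intro rk') auto
      then show "vec.dim (W a) = CARD('d) - r" unfolding W_def
        using rank_ker[of "mprod A (2 * (m - a) - 1) (2 * (m - a))"] by linarith
    qed
    show "r \<le> CARD('d)" by (rule r_le')
    show "\<forall>a<m. U a \<inter> W a = {0}"
    proof (intro allI impI)
      fix a assume "a < m"
      define l where "l = 2 * (m - a)"
      have l: "2 \<le> l" "l + 2 \<le> n" using \<open>a < m\<close> nb unfolding l_def m_def by auto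
      have sp: "mprod A (l - 1) (l + 2) = mprod A (l - 1) l ** mprod A (Suc l) (l + 2)"
        using l by (intro mprod_split) auto
      have "rank (mprod A (l - 1) (l + 2)) = r" using l by (intro rk') auto
      moreover have "rank (mprod A (Suc l) (l + 2)) = r" using l by (intro rk') auto
      ultimately have "rank (mprod A (l - 1) l ** mprod A (Suc l) (l + 2)) = rank (mprod A (Suc l) (l + 2))"
        using sp by simp
      then have "mat_im (mprod A (Suc l) (l + 2)) \<inter> mat_ker (mprod A (l - 1) l) = {0}"
        by (rule int_zero_of_rank[OF n1 rA rp])
      then show "U a \<inter> W a = {0}" unfolding U_def W_def l_def[symmetric]
        by (simp add: numeral_2_eq_2)
    qed
    show "\<forall>a b. a < b \<longrightarrow> b < m \<longrightarrow> U b \<inter> W a \<noteq> {0}"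
    proof (intro allI impI)
      fix a b assume ab: "a < b" "b < m"
      define k where "k = 2 * (m - b) + 1"
      define l where "l = 2 * (m - a)"
      have kl: "1 \<le> k" "k < l" "l \<le> n" using ab nb unfolding k_def l_def m_def by auto
      have "U b = mat_im (mprod A k l)" unfolding U_def k_def[symmetric]
        using im_eq'[OF kl] by (simp add: k_def)
      moreover have "W a = mat_ker (mprod A k l)" unfolding W_def l_def[symmetric]
        using ker_eq'[OF kl] by simp
      ultimately show "U b \<inter> W a \<noteq> {0}" using nz[OF kl] by simp
    qed
  qed
  then show False unfolding m_def by simp
qed

lemma part1:
  "\<exists>is. sorted_wrt (<) is \<and> is \<noteq> [] \<and> hd is = 1 \<and> last is = n
      \<and> mprod A 1 n \<parallel> list_prod A is \<and> length is \<le> (CARD('d) choose r) + 3"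
proof (cases "n \<le> 3")
  case True
  show ?thesis
  proof (intro exI conjI)
    show "sorted_wrt (<) [1..<Suc n]" by (rule sorted_wrt_upt)
    show "[1..<Suc n] \<noteq> []" using n1 by simp
    show "hd [1..<Suc n] = 1" using n1 by (simp add: upt_conv_Cons del: upt_Suc)
    show "last [1..<Suc n] = n" using n1 by simp
    show "mprod A 1 n \<parallel> list_prod A [1..<Suc n]" by (simp add: par_def mprod_def)
    show "length [1..<Suc n] \<le> (CARD('d) choose r) + 3" using True by simp
  qed
next
  case False
  then have n4: "n \<ge> 4" by simp
  define Qp where "Qp js = list_prod A ([1, 2] @ js @ [n - 1, n])" for js
  define good where "good js \<longleftrightarrow> sorted_wrt (<) js \<and> set js \<subseteq> {3..n - 2} \<and> rank (Qp js) = r" for js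
  have full: "[1, 2] @ [3..<n - 1] @ [n - 1, n] = [1..<Suc n]"
  proof -
    have a: "[1..<Suc n] = [1..<3] @ [3..<Suc n]"
      using upt_add_eq_append[of 1 3 "Suc n - 3"] n4 by (simp del: upt_Suc)
    have b: "[3..<Suc n] = [3..<n - 1] @ [n - 1..<Suc n]"
      using upt_add_eq_append[of 3 "n - 1" 2] n4 by (simp del: upt_Suc)
    have c: "[1..<3] = [1, 2::nat]" by (simp add: upt_conv_Cons numeral_3_eq_3 del: upt_Suc)
    have d: "[n - 1..<Suc n] = [n - 1, n]" using n4 by (simp add: upt_conv_Cons del: upt_Suc)
    have "[1..<Suc n] = [1..<3] @ [3..<n - 1] @ [n - 1..<Suc n]" using a b by simp
    moreover note c d
    ultimately show ?thesis by simp
  qed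
  have "good [3..<n - 1]" unfolding good_def Qp_def full using rA by (auto simp: sorted_wrt_upt mprod_def)
  from ex_has_least_nat[of good "[3..<n - 1]" length, OF this]
  obtain js where js: "good js" and jsmin0: "\<forall>y. good y \<longrightarrow> length js \<le> length y"
    by blast
  have jsmin: "length js \<le> length js'" if "good js'" for js' using jsmin0 that by blast
  have js_sorted: "sorted_wrt (<) js" and js_set: "set js \<subseteq> {3..n - 2}" and js_rank: "rank (Qp js) = r"
    using js unfolding good_def by auto
  define "is" where "is = [1, 2] @ js @ [n - 1, n]"
  have r12: "rank (A 1 ** A 2) = r"
  proof -
    have "(1::nat) \<in> {1..n - 1}" using n4 by simp
    then have "rank (A 1 ** A (1 + 1)) = r" using rp by blast
    moreover have "(1::nat) + 1 = 2" by simp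
    ultimately show ?thesis by metis
  qed
  have rnn: "rank (A (n - 1) ** A n) = r"
  proof -
    have "n - 1 \<in> {1..n - 1}" using n4 by simp
    then have "rank (A (n - 1) ** A (n - 1 + 1)) = r" using rp by blast
    moreover have "n - 1 + 1 = n" using n4 by simp
    ultimately show ?thesis by simp
  qed
  define L where "L a = list_prod A ([1, 2] @ take a js)" for a
  define Rr where "Rr b = list_prod A (drop b js @ [n - 1, n])" for b
  have QLR: "Qp js = L a ** Rr a" for a
  proof -
    have "[1, 2] @ js @ [n - 1, n] = ([1, 2] @ take a js) @ (drop a js @ [n - 1, n])" by simp
    then show ?thesis unfolding Qp_def L_def Rr_def by (simp only: list_prod_append)
  qed
  have L12: "L a = (A 1 ** A 2) ** list_prod A (take a js)" for a
    unfolding L_def by (simp add: list_prod_append list_prod_Cons matrix_mul_assoc)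
  have Rnn: "Rr b = list_prod A (drop b js) ** (A (n - 1) ** A n)" for b
    unfolding Rr_def by (simp add: list_prod_append list_prod_Cons matrix_mul_rid)
  have rL: "rank (L a) = r" for a
  proof -
    have "rank (L a) \<le> r" using rank_mult_le_left[of "A 1 ** A 2" "list_prod A (take a js)"] L12[of a] r12 by simp
    moreover have "r \<le> rank (L a)" using rank_mult_le_left[of "L a" "Rr a"] QLR[of a] js_rank by simp
    ultimately show ?thesis by simp
  qed
  have rR: "rank (Rr b) = r" for b
  proof -
    have "rank (Rr b) \<le> r" using rank_mult_le_right[of "list_prod A (drop b js)" "A (n - 1) ** A n"] Rnn[of b] rnn by simp
    moreover have "r \<le> rank (Rr b)" using rank_mult_le_right[of "L b" "Rr b"] QLR[of b] js_rank by simp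
    ultimately show ?thesis by simp
  qed
  define m where "m = length js + 1"
  have "m \<le> CARD('d) choose r"
  proof (rule key_bound[of m "\<lambda>a. mat_im (Rr a)" r "\<lambda>a. mat_ker (L a)"])
    show "\<forall>a<m. vec.subspace (mat_im (Rr a)) \<and> vec.dim (mat_im (Rr a)) = r"
    proof (intro allI impI conjI)
      fix a show "vec.subspace (mat_im (Rr a))" by (rule subspace_mat_im)
      show "vec.dim (mat_im (Rr a)) = r" using rR[of a] by (simp add: rank_im)
    qed
    show "\<forall>a<m. vec.subspace (mat_ker (L a)) \<and> vec.dim (mat_ker (L a)) = CARD('d) - r"
    proof (intro allI impI conjI)
      fix a show "vec.subspace (mat_ker (L a))" by (rule subspace_mat_ker)
      show "vec.dim (mat_ker (L a)) = CARD('d) - r" using rank_ker[of "L a"] rL[of a] by linarith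
    qed
    show "r \<le> CARD('d)" by (rule r_le')
    show "\<forall>a<m. mat_im (Rr a) \<inter> mat_ker (L a) = {0}"
    proof (intro allI impI)
      fix a
      have "rank (L a ** Rr a) = rank (Rr a)" using QLR[of a] js_rank rR[of a] by simp
      then show "mat_im (Rr a) \<inter> mat_ker (L a) = {0}" by (rule int_zero_of_rank[OF n1 rA rp])
    qed
    show "\<forall>a b. a < b \<longrightarrow> b < m \<longrightarrow> mat_im (Rr b) \<inter> mat_ker (L a) \<noteq> {0}"
    proof (intro allI impI)
      fix a b assume ab: "a < b" "b < m"
      define js' where "js' = take a js @ drop b js"
      have len: "length js' < length js" using ab unfolding js'_def m_def by simp
      have s': "sorted_wrt (<) js'" unfolding js'_def using js_sorted ab by (intro sorted_take_drop) auto
      have "set js' \<subseteq> set js" unfolding js'_def by (auto dest: in_set_takeD in_set_dropD)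
      then have set': "set js' \<subseteq> {3..n - 2}" using js_set by (rule order_trans)
      have QLR': "Qp js' = L a ** Rr b"
      proof -
        have "[1, 2] @ js' @ [n - 1, n] = ([1, 2] @ take a js) @ (drop b js @ [n - 1, n])"
          unfolding js'_def by simp
        then show ?thesis unfolding Qp_def L_def Rr_def by (simp only: list_prod_append)
      qed
      have "\<not> good js'"
      proof
        assume "good js'"
        then have "length js \<le> length js'" by (rule jsmin)
        then show False using len by simp
      qed
      then have "rank (L a ** Rr b) \<noteq> r" using s' set' QLR' unfolding good_def by simp
      then have "rank (L a ** Rr b) \<noteq> rank (Rr b)" using rR[of b] by simp
      then show "mat_im (Rr b) \<inter> mat_ker (L a) \<noteq> {0}" by (rule int_nonzero_of_rank[OF n1 rA rp])
    qed
  qed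
  have im1n: "mat_im (mprod A 1 n) = mat_im (A 1 ** A 2)"
    using im_eq'[of 1 n] n4 by (simp add: mprod_two numeral_2_eq_2)
  have ker1n: "mat_ker (mprod A 1 n) = mat_ker (A (n - 1) ** A n)"
  proof -
    have "mat_ker (mprod A 1 n) = mat_ker (mprod A (n - 1) n)" using ker_eq'[of 1 n] n4 by simp
    moreover have "mprod A (n - 1) n = A (n - 1) ** A n"
      using mprod_two[of A "n - 1"] n4 by (simp add: Suc_diff_1)
    ultimately show ?thesis by simp
  qed
  have Qis: "list_prod A is = Qp js" unfolding is_def Qp_def ..
  have rQ: "rank (list_prod A is) = r" using Qis js_rank by simp
  show ?thesis
  proof (intro exI[of _ "is"] conjI)
    have jsb: "\<And>x. x \<in> set js \<Longrightarrow> 3 \<le> x \<and> x \<le> n - 2" using js_set by auto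
    show "sorted_wrt (<) is" unfolding is_def using js_sorted n4
      by (auto simp: sorted_wrt_append dest!: jsb)
    show "is \<noteq> []" unfolding is_def by simp
    show "hd is = 1" unfolding is_def by simp
    show "last is = n" unfolding is_def by simp
    show "length is \<le> (CARD('d) choose r) + 3" using \<open>m \<le> _\<close> unfolding is_def m_def by simp
    show "mprod A 1 n \<parallel> list_prod A is"
      unfolding par_def
    proof
      have "list_prod A is = (A 1 ** A 2) ** (list_prod A (take 0 js) ** Rr 0)"
        unfolding Qis QLR[of 0] L12 by (simp only: matrix_mul_assoc)
      then have "mat_im (list_prod A is) \<subseteq> mat_im (A 1 ** A 2)"
        using mat_im_mult_sub[of "A 1 ** A 2" "list_prod A (take 0 js) ** Rr 0"] by simp
      moreover have "vec.dim (mat_im (A 1 ** A 2)) \<le> vec.dim (mat_im (list_prod A is))"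
        using rQ r12 by (simp add: rank_im[symmetric])
      ultimately have "mat_im (list_prod A is) = mat_im (A 1 ** A 2)"
        by (rule vec.subspace_dim_equal[OF subspace_mat_im subspace_mat_im])
      then show "mat_im (mprod A 1 n) = mat_im (list_prod A is)" using im1n by simp
      have "list_prod A is = (L 0 ** list_prod A (drop 0 js)) ** (A (n - 1) ** A n)"
        unfolding Qis QLR[of 0] Rnn by (simp only: matrix_mul_assoc)
      then have "mat_ker (A (n - 1) ** A n) \<subseteq> mat_ker (list_prod A is)"
        using mat_ker_mult_sub[of "A (n - 1) ** A n" "L 0 ** list_prod A (drop 0 js)"] by simp
      moreover have "vec.dim (mat_ker (list_prod A is)) \<le> vec.dim (mat_ker (A (n - 1) ** A n))"
        using rQ rnn rank_ker[of "list_prod A is"] rank_ker[of "A (n - 1) ** A n"] by linarith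
      ultimately have "mat_ker (A (n - 1) ** A n) = mat_ker (list_prod A is)"
        by (rule vec.subspace_dim_equal[OF subspace_mat_ker subspace_mat_ker])
      then show "mat_ker (mprod A 1 n) = mat_ker (list_prod A is)" using ker1n by simp
    qed
  qed
qed

end

theorem lemmaV10:
  fixes K :: "complex set" and A :: "nat \<Rightarrow> complex^'d^'d" and n r :: nat
  assumes "number_field K"
    and "n \<ge> 1"
    and "\<forall>i\<in>{1..n}. mat_over K (A i)"
    and "rank (mprod A 1 n) = r"
    and "\<forall>i\<in>{1..n-1}. rank (A i ** A (i + 1)) = r"
  shows "(\<exists>is. sorted_wrt (<) is \<and> is \<noteq> [] \<and> hd is = 1 \<and> last is = n
              \<and> mprod A 1 n \<parallel> list_prod A is
              \<and> length is \<le> (CARD('d) choose r) + 3)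
       \<and> (n \<ge> 2 * (CARD('d) choose r) + 4 \<longrightarrow>
            (\<exists>k l. 1 \<le> k \<and> k < l \<and> l \<le> n
               \<and> completely_pseudo_regular K (mprod A k l)
               \<and> rank (mprod A k l) = r))"
proof (intro conjI impI)
  show "\<exists>is. sorted_wrt (<) is \<and> is \<noteq> [] \<and> hd is = 1 \<and> last is = n
              \<and> mprod A 1 n \<parallel> list_prod A is
              \<and> length is \<le> (CARD('d) choose r) + 3"
    by (rule part1[OF assms(2) assms(4) assms(5)])
  assume "n \<ge> 2 * (CARD('d) choose r) + 4"
  then show "\<exists>k l. 1 \<le> k \<and> k < l \<and> l \<le> n
               \<and> completely_pseudo_regular K (mprod A k l)
               \<and> rank (mprod A k l) = r"
    by (rule part2[OF assms(2) assms(4) assms(5) assms(1) assms(3)])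
qed

end
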